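(* Let $G$ be a topological group whose torsion part $\mathrm{tor}(G)$ is dense in $G$ and totally disconnected. Then a $G$-regular space $X$ is totally disconnected if and only if $\mathrm{tor}(C_p(X,G))$ is dense in $C_p(X,G)$.
   Context: All spaces are Tychonoff and non-empty; topological groups are Hausdorff; $e$ is the identity. For a group $K$, $\mathrm{tor}(K)=\{g\in K: g^n=e\text{ for some } n\ge1\}$. $C_p(X,G)$ is the group of continuous maps $X\to G$ with pointwise operations and the topology of pointwise convergence. $X$ is $G$-regular if for every closed $F\subseteq X$ and every $x\in X\setminus F$ there exist $f\in C_p(X,G)$ and $g\in G\setminus\{e\}$ with $f(x)=g$ and $f(F)\subseteq\{e\}$. A space is totally disconnected if for every two distinct points $x,y$ there is a clopen set containing $x$ but not $y$. *)

theory Defs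
  imports "HOL-Analysis.Analysis" "HOL-Algebra.Group"
begin

definition topological_group :: "('g, 'm) monoid_scheme \<Rightarrow> 'g topology \<Rightarrow> bool" where
  "topological_group G T \<longleftrightarrow> group G \<and> topspace T = carrier G \<and> Hausdorff_space T \<and>
     continuous_map (prod_topology T T) T (\<lambda>(a, b). a \<otimes>\<^bsub>G\<^esub> b) \<and>
     continuous_map T T (\<lambda>a. inv\<^bsub>G\<^esub> a)"

definition tychonoff_space :: "'a topology \<Rightarrow> bool" where
  "tychonoff_space X \<longleftrightarrow> t1_space X \<and> completely_regular_space X"

definition totally_disconnected_sp :: "'a topology \<Rightarrow> bool" where
  "totally_disconnected_sp X \<longleftrightarrow>
     (\<forall>x\<in>topspace X. \<forall>y\<in>topspace X. x \<noteq> y \<longrightarrow>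
        (\<exists>U. openin X U \<and> closedin X U \<and> x \<in> U \<and> y \<notin> U))"

definition group_tor :: "('g, 'm) monoid_scheme \<Rightarrow> 'g set" where
  "group_tor G = {g \<in> carrier G. \<exists>n::nat. n \<ge> 1 \<and> g [^]\<^bsub>G\<^esub> n = \<one>\<^bsub>G\<^esub>}"

definition Cp_set :: "'x topology \<Rightarrow> 'g topology \<Rightarrow> ('x \<Rightarrow> 'g) set" where
  "Cp_set X T = {f. continuous_map X T f \<and> f \<in> extensional (topspace X)}"

definition Cp_top :: "'x topology \<Rightarrow> 'g topology \<Rightarrow> ('x \<Rightarrow> 'g) topology" where
  "Cp_top X T = subtopology (product_topology (\<lambda>_. T) (topspace X)) (Cp_set X T)"

text \<open>Torsion part of C_p(X,G) under pointwise operations: f^n = e means f(x)^n = e for all x.\<close>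
definition Cp_tor :: "('g, 'm) monoid_scheme \<Rightarrow> 'x topology \<Rightarrow> 'g topology \<Rightarrow> ('x \<Rightarrow> 'g) set" where
  "Cp_tor G X T = {f \<in> Cp_set X T. \<exists>n::nat. n \<ge> 1 \<and>
      (\<forall>x\<in>topspace X. f x [^]\<^bsub>G\<^esub> n = \<one>\<^bsub>G\<^esub>)}"

definition G_regular :: "('g, 'm) monoid_scheme \<Rightarrow> 'g topology \<Rightarrow> 'x topology \<Rightarrow> bool" where
  "G_regular G T X \<longleftrightarrow>
     (\<forall>F x. closedin X F \<and> x \<in> topspace X - F \<longrightarrow>
        (\<exists>f\<in>Cp_set X T. \<exists>g\<in>carrier G. g \<noteq> \<one>\<^bsub>G\<^esub> \<and> f x = g \<and> f ` F \<subseteq> {\<one>\<^bsub>G\<^esub>}))"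

end

theory Submission imports Defs begin

lemma cont_if_clopen:
  assumes "openin X W" "closedin X W" "continuous_map X Y f" "continuous_map X Y g"
  shows "continuous_map X Y (\<lambda>x. if x \<in> W then f x else g x)"
proof (rule continuous_map_cases)
  have W: "W \<subseteq> topspace X" using assms(1) openin_subset by blast
  show "continuous_map (subtopology X (X closure_of {x. x \<in> W})) Y f"
    using assms(3) continuous_map_from_subtopology by blast
  show "continuous_map (subtopology X (X closure_of {x. x \<notin> W})) Y g"
    using assms(4) continuous_map_from_subtopology by blast
  have "X frontier_of {x. x \<in> W} = {}" using frontier_of_eq_empty[OF W] assms(1,2) by simp
  then show "\<And>x. x \<in> X frontier_of {x. x \<in> W} \<Longrightarrow> f x = g x" by simp
qed

lemma clopen_sep_finite:
  assumes td: "totally_disconnected_sp X" and fin: "finite K"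
    and K: "K \<subseteq> topspace X" and a: "a \<in> topspace X" "a \<notin> K"
  shows "\<exists>W. openin X W \<and> closedin X W \<and> a \<in> W \<and> W \<inter> K = {}"
  using fin K a(2)
proof (induction K rule: finite_induct)
  case empty
  then show ?case using a by (intro exI[of _ "topspace X"]) auto
next
  case (insert b K)
  then obtain W where W: "openin X W" "closedin X W" "a \<in> W" "W \<inter> K = {}" by auto
  obtain V where V: "openin X V" "closedin X V" "a \<in> V" "b \<notin> V"
    using td insert.prems a unfolding totally_disconnected_sp_def by force
  show ?case using W V by (intro exI[of _ "W \<inter> V"]) auto
qed

lemma locconst_ext:
  assumes td: "totally_disconnected_sp X" and fin: "finite K" and ne: "K \<noteq> {}"
    and K: "K \<subseteq> topspace X" and c: "c ` K \<subseteq> topspace Y"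
  shows "\<exists>h. continuous_map X Y h \<and> (\<forall>k\<in>K. h k = c k) \<and> (\<forall>x\<in>topspace X. h x \<in> c ` K)"
  using fin ne K c
proof (induction K rule: finite_ne_induct)
  case (singleton a)
  then show ?case by (intro exI[of _ "\<lambda>x. c a"]) auto
next
  case (insert a K)
  then obtain h where h: "continuous_map X Y h" "\<forall>k\<in>K. h k = c k" "\<forall>x\<in>topspace X. h x \<in> c ` K"
    by auto
  obtain W where W: "openin X W" "closedin X W" "a \<in> W" "W \<inter> K = {}"
    using clopen_sep_finite[OF td \<open>finite K\<close>, of a] insert.prems insert.hyps by auto
  have ca: "c a \<in> topspace Y" using insert by auto
  show ?case
  proof (intro exI[of _ "\<lambda>x. if x \<in> W then c a else h x"] conjI ballI)
    show "continuous_map X Y (\<lambda>x. if x \<in> W then c a else h x)"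
      by (rule cont_if_clopen[OF W(1,2) _ h(1)]) (use ca in simp)
  next
    fix k assume "k \<in> insert a K" then show "(if k \<in> W then c a else h k) = c k"
      using W h by auto
  next
    fix x assume "x \<in> topspace X" then show "(if x \<in> W then c a else h x) \<in> c ` insert a K"
      using h by auto
  qed
qed

lemma tor_common:
  fixes G (structure)
  assumes G: "group G" and fin: "finite S" and S: "S \<subseteq> group_tor G"
  shows "\<exists>N::nat. N \<ge> 1 \<and> (\<forall>s\<in>S. s [^]\<^bsub>G\<^esub> N = \<one>\<^bsub>G\<^esub>)"
  using fin S
proof (induction S rule: finite_induct)
  case empty
  then show ?case by (intro exI[of _ 1]) auto
next
  case (insert s S)
  interpret group G by (rule G)
  obtain N :: nat where N: "N \<ge> 1" "\<forall>t\<in>S. t [^] N = \<one>" using insert by auto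
  obtain n :: nat where n: "n \<ge> 1" "s [^] n = \<one>" "s \<in> carrier G"
    using insert.prems unfolding group_tor_def by auto
  have "\<forall>t\<in>insert s S. t [^] (N * n) = \<one>"
  proof
    fix t assume t: "t \<in> insert s S"
    show "t [^] (N * n) = \<one>"
    proof (cases "t = s")
      case True
      then show ?thesis using n nat_pow_pow[of s n N] by (simp add: mult.commute)
    next
      case False
      then have "t \<in> S" "t \<in> carrier G" using t insert.prems unfolding group_tor_def by auto
      then show ?thesis using N nat_pow_pow[of t N n] by simp
    qed
  qed
  then show ?case using N n by (intro exI[of _ "N*n"]) auto
qed


lemma Cp_topspace: "topspace (Cp_top X T) = Cp_set X T"
  unfolding Cp_top_def Cp_set_def
  by (auto simp: PiE_iff continuous_map_def extensional_def)

lemma Cp_eval_cont: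
  assumes "x \<in> topspace X"
  shows "continuous_map (Cp_top X T) T (\<lambda>h. h x)"
  unfolding Cp_top_def
  by (rule continuous_map_from_subtopology) (rule continuous_map_product_projection[OF assms])

theorem theorem8p1:
  fixes G :: "('g, 'm) monoid_scheme" and T :: "'g topology" and X :: "'x topology"
  assumes "topological_group G T"
    and "T closure_of (group_tor G) = topspace T"
    and "totally_disconnected_sp (subtopology T (group_tor G))"
    and "tychonoff_space X" and "topspace X \<noteq> {}"
    and "G_regular G T X"
  shows "totally_disconnected_sp X \<longleftrightarrow>
           (Cp_top X T) closure_of (Cp_tor G X T) = topspace (Cp_top X T)"
proof
  have grp: "group G" and TG: "topspace T = carrier G" and haus: "Hausdorff_space T"
    using assms(1) unfolding topological_group_def by auto
  assume td: "totally_disconnected_sp X"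
  show "(Cp_top X T) closure_of (Cp_tor G X T) = topspace (Cp_top X T)"
  proof
    show "Cp_top X T closure_of Cp_tor G X T \<subseteq> topspace (Cp_top X T)"
      by (rule closure_of_subset_topspace)
    show "topspace (Cp_top X T) \<subseteq> Cp_top X T closure_of Cp_tor G X T"
    proof
      fix f assume f: "f \<in> topspace (Cp_top X T)"
      then have fC: "f \<in> Cp_set X T" by (simp add: Cp_topspace)
      then have fcont: "continuous_map X T f" and fext: "f \<in> extensional (topspace X)"
        unfolding Cp_set_def by auto
      show "f \<in> Cp_top X T closure_of Cp_tor G X T"
        unfolding in_closure_of
      proof (intro conjI allI impI)
        show "f \<in> topspace (Cp_top X T)" by (rule f)
        fix Ob assume "f \<in> Ob \<and> openin (Cp_top X T) Ob"
        then obtain V where V: "openin (product_topology (\<lambda>_. T) (topspace X)) V"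
          "Ob = V \<inter> Cp_set X T" "f \<in> V"
          unfolding Cp_top_def openin_subtopology by auto
        then obtain U where U: "finite {i \<in> topspace X. U i \<noteq> topspace T}"
          "\<forall>i\<in>topspace X. openin T (U i)" "f \<in> Pi\<^sub>E (topspace X) U"
          "Pi\<^sub>E (topspace X) U \<subseteq> V"
          unfolding openin_product_topology_alt by metis
        obtain x0 where x0: "x0 \<in> topspace X" using assms(5) by blast
        define K where "K = insert x0 {i \<in> topspace X. U i \<noteq> topspace T}"
        have Kfin: "finite K" and Kne: "K \<noteq> {}" and KX: "K \<subseteq> topspace X"
          using U(1) x0 unfolding K_def by auto
        have "\<exists>t. t \<in> group_tor G \<and> t \<in> U k" if k: "k \<in> K" for k
        proof -
          have fk: "f k \<in> U k" "k \<in> topspace X" using U(3) k KX by (auto simp: PiE_iff)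
          then have "f k \<in> topspace T" using fcont by (auto simp: continuous_map_def)
          then have "f k \<in> T closure_of group_tor G" using assms(2) by simp
          then show ?thesis using fk U(2) unfolding in_closure_of by blast
        qed
        then obtain c where c: "\<And>k. k \<in> K \<Longrightarrow> c k \<in> group_tor G \<and> c k \<in> U k" by metis
        have ctop: "c ` K \<subseteq> topspace T" using c TG unfolding group_tor_def by auto
        obtain h where h: "continuous_map X T h" "\<forall>k\<in>K. h k = c k" "\<forall>x\<in>topspace X. h x \<in> c ` K"
          using locconst_ext[OF td Kfin Kne KX ctop] by blast
        define h' where "h' = (\<lambda>x. if x \<in> topspace X then h x else undefined)"
        have h'c: "continuous_map X T h'" using h(1) continuous_map_eq h'_def by fastforce
        have h'C: "h' \<in> Cp_set X T" using h'c unfolding Cp_set_def h'_def by (auto simp: extensional_def)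
        obtain N :: nat where N: "N \<ge> 1" "\<forall>s\<in>c ` K. s [^]\<^bsub>G\<^esub> N = \<one>\<^bsub>G\<^esub>"
          using tor_common[OF grp finite_imageI[OF Kfin]] c by blast
        have "h' \<in> Cp_tor G X T"
          unfolding Cp_tor_def using h'C N h(3) h'_def by (auto intro!: exI[of _ N])
        moreover have "h' \<in> Pi\<^sub>E (topspace X) U"
        proof -
          have "h' i \<in> U i" if i: "i \<in> topspace X" for i
          proof (cases "i \<in> K")
            case True then show ?thesis using c h(2) i h'_def by auto
          next
            case False
            then have "U i = topspace T" using i K_def by auto
            then show ?thesis using h'c i by (auto simp: continuous_map_def)
          qed
          then show ?thesis using h'_def by (auto simp: PiE_iff extensional_def)
        qed
        ultimately show "\<exists>y. y \<in> Cp_tor G X T \<and> y \<in> Ob"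
          using U(4) V(2) h'C by blast
      qed
    qed
  qed
next
  have grp: "group G" and TG: "topspace T = carrier G" and haus: "Hausdorff_space T"
    using assms(1) unfolding topological_group_def by auto
  assume dense: "(Cp_top X T) closure_of (Cp_tor G X T) = topspace (Cp_top X T)"
  show "totally_disconnected_sp X"
    unfolding totally_disconnected_sp_def
  proof (intro ballI impI)
    fix x y assume x: "x \<in> topspace X" and y: "y \<in> topspace X" and xy: "x \<noteq> y"
    have "t1_space X" using assms(4) unfolding tychonoff_space_def by auto
    then have "closedin X {y}" using y by (rule closedin_t1_singleton)
    then obtain f g where f: "f \<in> Cp_set X T" "g \<in> carrier G" "g \<noteq> \<one>\<^bsub>G\<^esub>" "f x = g"
      "f ` {y} \<subseteq> {\<one>\<^bsub>G\<^esub>}"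
    proof -
      have "x \<in> topspace X - {y}" using x xy by auto
      then show ?thesis using assms(6) \<open>closedin X {y}\<close> that unfolding G_regular_def by blast
    qed
    have one: "\<one>\<^bsub>G\<^esub> \<in> topspace T" using TG grp by (simp add: group.is_monoid monoid.one_closed)
    obtain U V where UV: "openin T U" "openin T V" "g \<in> U" "\<one>\<^bsub>G\<^esub> \<in> V" "disjnt U V"
    proof -
      have "g \<in> topspace T" using f(2) TG by simp
      then show ?thesis using haus f(3) one that unfolding Hausdorff_space_def by blast
    qed
    define Ob where "Ob = {h \<in> topspace (Cp_top X T). h x \<in> U} \<inter> {h \<in> topspace (Cp_top X T). h y \<in> V}"
    have "openin (Cp_top X T) Ob"
      unfolding Ob_def
      by (intro openin_Int openin_continuous_map_preimage[OF Cp_eval_cont] x y UV)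
    moreover have "f \<in> Ob" using f UV unfolding Ob_def by (auto simp: Cp_topspace)
    moreover have "f \<in> Cp_top X T closure_of Cp_tor G X T"
      using dense f by (simp add: Cp_topspace)
    ultimately obtain h where h: "h \<in> Cp_tor G X T" "h \<in> Ob" unfolding in_closure_of by blast
    then obtain n :: nat where n: "n \<ge> 1" "\<forall>z\<in>topspace X. h z [^]\<^bsub>G\<^esub> n = \<one>\<^bsub>G\<^esub>"
      and hC: "h \<in> Cp_set X T" unfolding Cp_tor_def by auto
    then have hc: "continuous_map X T h" unfolding Cp_set_def by auto
    have htor: "h z \<in> group_tor G" if "z \<in> topspace X" for z
      using that n hc TG unfolding group_tor_def continuous_map_def by auto
    have hxy: "h x \<noteq> h y" using h(2) UV(5) unfolding Ob_def disjnt_def by auto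
    have hc2: "continuous_map X (subtopology T (group_tor G)) h"
      by (rule continuous_map_into_subtopology[OF hc]) (use htor in auto)
    have tsub: "topspace (subtopology T (group_tor G)) = group_tor G"
      using TG unfolding group_tor_def by auto
    obtain W where W: "openin (subtopology T (group_tor G)) W" "closedin (subtopology T (group_tor G)) W"
      "h x \<in> W" "h y \<notin> W"
      using assms(3) htor[OF x] htor[OF y] hxy tsub unfolding totally_disconnected_sp_def by metis
    show "\<exists>U. openin X U \<and> closedin X U \<and> x \<in> U \<and> y \<notin> U"
      using openin_continuous_map_preimage[OF hc2 W(1)] closedin_continuous_map_preimage[OF hc2 W(2)]
        W(3,4) x
      by (intro exI[of _ "{z \<in> topspace X. h z \<in> W}"]) auto
  qed
qed

end
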